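(* Let $\sigma>0$ and let $X$ be lognormal$(0,\sigma^2)$, i.e. $X=e^{Y}$ with $Y\sim\mathrm{N}(0,\sigma^2)$, with density $f(x)=\frac{1}{x\sigma\sqrt{2\pi}}e^{-(\log x)^2/(2\sigma^2)}$, $x>0$. For $\theta>0$ let $\mathcal{L}(\theta)=\mathbb{E}[e^{-\theta X}]$, $\kappa(\theta)=\log\mathcal{L}(\theta)$, and let $F_\theta$ be the probability distribution on $(0,\infty)$ with density $f_\theta(x)=e^{-\theta x-\kappa(\theta)}f(x)$; write $\mathbb{E}_\theta$ and $\mathrm{Var}_\theta$ for the expectation and variance of $X$ when $X\sim F_\theta$. Define $$\mu_\theta=-\mathcal{W}(\theta\sigma^2),\qquad \sigma_\theta^2=\frac{\sigma^2}{1+\mathcal{W}(\theta\sigma^2)},$$ where $\mathcal{W}$ is the Lambert W function. Then $$\lim_{\theta\to\infty}\frac{\mathbb{E}_\theta[X]}{\exp\{\mu_\theta+\sigma_\theta^2/2\}}=1,\qquad \lim_{\theta\to\infty}\frac{\mathrm{Var}_\theta[X]}{\exp\{2\mu_\theta+\sigma_\theta^2\}\,\bigl(e^{\sigma_\theta^2}-1\bigr)}=1.$$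
   Context: The Lambert W function $\mathcal{W}(a)$ for $a>0$ is the unique (positive) solution $w$ of $we^{w}=a$. $F_\theta$ is the exponentially tilted (Esscher transformed) lognormal distribution. *)

theory Defs
  imports "HOL-Probability.Probability"
begin

definition lambertW :: "real \<Rightarrow> real" where
  "lambertW a = (THE w. w > 0 \<and> w * exp w = a)"

definition lognormal_density :: "real \<Rightarrow> real \<Rightarrow> real" where
  "lognormal_density \<sigma> x =
     (if x > 0 then exp (- (ln x)\<^sup>2 / (2 * \<sigma>\<^sup>2)) / (x * \<sigma> * sqrt (2 * pi)) else 0)"

definition lognormal_laplace :: "real \<Rightarrow> real \<Rightarrow> real" where
  "lognormal_laplace \<sigma> \<theta> = (LINT x:{0<..}|lborel. exp (- \<theta> * x) * lognormal_density \<sigma> x)"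

definition lognormal_kappa :: "real \<Rightarrow> real \<Rightarrow> real" where
  "lognormal_kappa \<sigma> \<theta> = ln (lognormal_laplace \<sigma> \<theta>)"

definition tilted_density :: "real \<Rightarrow> real \<Rightarrow> real \<Rightarrow> real" where
  "tilted_density \<sigma> \<theta> x = exp (- \<theta> * x - lognormal_kappa \<sigma> \<theta>) * lognormal_density \<sigma> x"

definition tilted_measure :: "real \<Rightarrow> real \<Rightarrow> real measure" where
  "tilted_measure \<sigma> \<theta> = density lborel (\<lambda>x. ennreal (tilted_density \<sigma> \<theta> x))"

definition tilted_mean :: "real \<Rightarrow> real \<Rightarrow> real" where
  "tilted_mean \<sigma> \<theta> = (\<integral>x. x \<partial>tilted_measure \<sigma> \<theta>)"

definition tilted_var :: "real \<Rightarrow> real \<Rightarrow> real" where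
  "tilted_var \<sigma> \<theta> = (\<integral>x. (x - tilted_mean \<sigma> \<theta>)\<^sup>2 \<partial>tilted_measure \<sigma> \<theta>)"

definition mu_theta :: "real \<Rightarrow> real \<Rightarrow> real" where
  "mu_theta \<sigma> \<theta> = - lambertW (\<theta> * \<sigma>\<^sup>2)"

definition sigma2_theta :: "real \<Rightarrow> real \<Rightarrow> real" where
  "sigma2_theta \<sigma> \<theta> = \<sigma>\<^sup>2 / (1 + lambertW (\<theta> * \<sigma>\<^sup>2))"

end

theory Submission
  imports Defs "HOL-Real_Asymp.Real_Asymp"
begin


lemma xexp_strict_mono:
  fixes w1 w2 :: real
  assumes "0 \<le> w1" "w1 < w2"
  shows "w1 * exp w1 < w2 * exp w2"
proof -
  have "w1 * exp w1 \<le> w1 * exp w2" using assms by (intro mult_left_mono) auto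
  also have "\<dots> < w2 * exp w2" using assms by (intro mult_strict_right_mono) auto
  finally show ?thesis .
qed

lemma lambertW_props:
  fixes a :: real
  assumes "a > 0"
  shows "lambertW a > 0 \<and> lambertW a * exp (lambertW a) = a"
proof -
  have "\<exists>w. 0 \<le> w \<and> w \<le> a \<and> w * exp w = a"
  proof (rule IVT')
    show "0 * exp 0 \<le> a" using assms by simp
    have "a * 1 \<le> a * exp a" using assms by (intro mult_left_mono) auto
    then show "a \<le> a * exp a" by simp
    show "0 \<le> a" using assms by simp
    show "continuous_on {0..a} (\<lambda>w. w * exp w)" by (intro continuous_intros)
  qed
  then obtain w where w: "0 \<le> w" "w * exp w = a" by blast
  with assms have wp: "w > 0" by (cases "w = 0") auto
  have "\<exists>!w. w > 0 \<and> w * exp w = a"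
  proof (rule ex1I[of _ w])
    show "w > 0 \<and> w * exp w = a" using wp w by simp
    fix v assume v: "v > 0 \<and> v * exp v = a"
    show "v = w"
    proof (rule ccontr)
      assume "v \<noteq> w"
      then consider "v < w" | "w < v" by linarith
      then show False
        using xexp_strict_mono[of v w] xexp_strict_mono[of w v] v w wp by cases auto
    qed
  qed
  then have "lambertW a > 0 \<and> lambertW a * exp (lambertW a) = a"
    unfolding lambertW_def by (rule theI')
  then show ?thesis .
qed

lemma lambertW_at_top:
  fixes s :: real
  assumes s: "s > 0"
  shows "filterlim (\<lambda>t. lambertW (t * s\<^sup>2)) at_top at_top"
  unfolding filterlim_at_top
proof
  fix Z :: real
  have "eventually (\<lambda>t. t > max 0 (\<bar>Z\<bar> * exp \<bar>Z\<bar> / s\<^sup>2)) at_top"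
    by (rule eventually_gt_at_top)
  then show "eventually (\<lambda>t. Z \<le> lambertW (t * s\<^sup>2)) at_top"
  proof eventually_elim
    case (elim t)
    have "0 \<le> \<bar>Z\<bar> * exp \<bar>Z\<bar> / s\<^sup>2" by simp
    then have "t > 0" using elim by linarith
    then have tp: "t * s\<^sup>2 > 0" using s by simp
    have gt: "t * s\<^sup>2 > \<bar>Z\<bar> * exp \<bar>Z\<bar>" using elim s by (simp add: field_simps)
    from lambertW_props[OF tp] have W: "lambertW (t * s\<^sup>2) > 0"
      "lambertW (t * s\<^sup>2) * exp (lambertW (t * s\<^sup>2)) = t * s\<^sup>2" by auto
    have "\<bar>Z\<bar> \<le> lambertW (t * s\<^sup>2)"
    proof (rule ccontr)
      assume "\<not> ?thesis"
      then have "lambertW (t * s\<^sup>2) * exp (lambertW (t * s\<^sup>2)) < \<bar>Z\<bar> * exp \<bar>Z\<bar>"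
        using W by (intro xexp_strict_mono) auto
      then show False using W gt by simp
    qed
    then show ?case by simp
  qed
qed

definition Dn :: "real \<Rightarrow> real \<Rightarrow> real \<Rightarrow> real" where
  "Dn s t x = exp (- t * x) * lognormal_density s x"

lemma Dn_measurable[measurable]: "Dn s t \<in> borel_measurable borel"
  unfolding Dn_def lognormal_density_def by measurable

lemma Dn_zero: "x \<le> 0 \<Longrightarrow> Dn s t x = 0"
  by (simp add: Dn_def lognormal_density_def)

lemma Dn_nonneg: "s > 0 \<Longrightarrow> Dn s t x \<ge> 0"
  by (simp add: Dn_def lognormal_density_def)

lemma Dn_pos: "s > 0 \<Longrightarrow> x > 0 \<Longrightarrow> Dn s t x > 0"
  by (simp add: Dn_def lognormal_density_def)

lemma Dn_r: "s > 0 \<Longrightarrow> x > 0 \<Longrightarrow>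
  Dn s t x = exp (- t * x + - (ln x)\<^sup>2 / (2 * s\<^sup>2)) / (x * (s * sqrt (2 * pi)))"
proof -
  assume a: "s > 0" "x > 0"
  have "exp (- t * x + - (ln x)\<^sup>2 / (2 * s\<^sup>2)) = exp (- t * x) * exp (- (ln x)\<^sup>2 / (2 * s\<^sup>2))"
    by (rule exp_add)
  then show ?thesis using a by (simp add: Dn_def lognormal_density_def mult.assoc)
qed

lemma gauss_tail: 
  fixes s u :: real assumes s: "s > 0"
  shows "exp (- u\<^sup>2 / (2 * s\<^sup>2)) \<le> exp (25 * s\<^sup>2 / 2) * exp (- 5 * \<bar>u\<bar>)"
proof -
  have "0 \<le> (\<bar>u\<bar> - 5 * s\<^sup>2)\<^sup>2" by simp
  then have "10 * s\<^sup>2 * \<bar>u\<bar> \<le> u\<^sup>2 + 25 * s\<^sup>2 * s\<^sup>2"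
    by (simp add: power2_eq_square algebra_simps)
  then have "- u\<^sup>2 / (2 * s\<^sup>2) \<le> 25 * s\<^sup>2 / 2 + - 5 * \<bar>u\<bar>"
    using s by (simp add: field_simps)
  then have "exp (- u\<^sup>2 / (2 * s\<^sup>2)) \<le> exp (25 * s\<^sup>2 / 2 + - 5 * \<bar>u\<bar>)" 
    by (simp only: exp_le_cancel_iff)
  then show ?thesis by (simp only: exp_add)
qed

lemma poly_bound:
  fixes x :: real assumes x: "x > 0"
  shows "(1 + x\<^sup>2 + (ln x)\<^sup>2) * exp (- 5 * \<bar>ln x\<bar>) / x \<le> 6 * inverse (1 + x\<^sup>2)"
proof (cases "x \<ge> 1")
  case True
  have l0: "ln x \<ge> 0" using True by simp
  have l1: "ln x \<le> x" using ln_le_minus_one[of x] x by simp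
  have e: "exp (- 5 * \<bar>ln x\<bar>) = inverse (x ^ 5)"
  proof -
    have "exp (5 * ln x) = x ^ 5" using exp_of_nat_mult[of 5 "ln x"] x by simp
    then show ?thesis using l0 by (simp add: exp_minus)
  qed
  have sq: "(ln x)\<^sup>2 \<le> x\<^sup>2" using l0 l1 by (intro power_mono) auto
  have x2: "1 \<le> x\<^sup>2" using True by (simp add: one_le_power)
  have "(1 + x\<^sup>2 + (ln x)\<^sup>2) * (1 + x\<^sup>2) \<le> (3 * x\<^sup>2) * (2 * x\<^sup>2)"
    using sq x2 by (intro mult_mono) auto
  also have "\<dots> \<le> 6 * x ^ 6"
  proof -
    have "x ^ 4 \<le> x ^ 6" using True by (intro power_increasing) auto
    then show ?thesis by (simp add: power2_eq_square power_numeral_reduce)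
  qed
  finally have *: "(1 + x\<^sup>2 + (ln x)\<^sup>2) * (1 + x\<^sup>2) \<le> 6 * x ^ 6" .
  have eq: "(1 + x\<^sup>2 + (ln x)\<^sup>2) * inverse (x ^ 5) / x = (1 + x\<^sup>2 + (ln x)\<^sup>2) / x ^ 6"
    using x by (simp add: field_simps power_numeral_reduce)
  have "(1 + x\<^sup>2 + (ln x)\<^sup>2) / x ^ 6 \<le> 6 / (1 + x\<^sup>2)"
    using * x by (simp add: divide_simps add_pos_nonneg)
  then show ?thesis unfolding e eq by (simp add: divide_inverse)
next
  case False
  have l0: "ln x \<le> 0" using False x by simp
  have l1: "- ln x \<le> 1 / x"
  proof -
    have "ln (1/x) \<le> 1/x - 1" using ln_le_minus_one[of "1/x"] x by simp
    then show ?thesis using x by (simp add: ln_div)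
  qed
  have e: "exp (- 5 * \<bar>ln x\<bar>) = x ^ 5"
    using exp_of_nat_mult[of 5 "ln x"] x l0 by simp
  have sq: "(ln x)\<^sup>2 * x\<^sup>2 \<le> 1"
  proof -
    have "(- ln x) * x \<le> 1" using l1 x by (simp add: field_simps)
    moreover have "0 \<le> (- ln x) * x" using l0 x by (intro mult_nonneg_nonneg) auto
    ultimately have "((- ln x) * x)\<^sup>2 \<le> 1\<^sup>2" by (intro power_mono) auto
    then show ?thesis by (simp add: power_mult_distrib)
  qed
  have x2: "x\<^sup>2 \<le> 1" using False x by (simp add: power_le_one)
  have x4: "x ^ 4 \<le> 1" using False x by (simp add: power_le_one)
  have x6: "x ^ 6 \<le> 1" using False x by (simp add: power_le_one)
  have "(1 + x\<^sup>2 + (ln x)\<^sup>2) * x ^ 4 = x ^ 4 + x ^ 6 + ((ln x)\<^sup>2 * x\<^sup>2) * x\<^sup>2"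
    by (simp add: eval_nat_numeral algebra_simps)
  also have "\<dots> \<le> 1 + 1 + 1 * 1"
    using x2 x4 x6 sq by (intro add_mono mult_mono) auto
  finally have a: "(1 + x\<^sup>2 + (ln x)\<^sup>2) * x ^ 4 \<le> 3" by simp
  have "(1 + x\<^sup>2 + (ln x)\<^sup>2) * x ^ 4 * (1 + x\<^sup>2) \<le> 3 * 2"
    using a x2 by (intro mult_mono) auto
  then have b: "(1 + x\<^sup>2 + (ln x)\<^sup>2) * x ^ 4 \<le> 6 / (1 + x\<^sup>2)"
    by (simp add: divide_simps add_pos_nonneg)
  have eq: "(1 + x\<^sup>2 + (ln x)\<^sup>2) * x ^ 5 / x = (1 + x\<^sup>2 + (ln x)\<^sup>2) * x ^ 4"
    using x by (simp add: eval_nat_numeral)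
  show ?thesis unfolding e eq using b by (simp add: divide_inverse)
qed



lemma integrable_inv_sq: "integrable lborel (\<lambda>x::real. inverse (1 + x\<^sup>2))"
  using integrable_inverse_1_plus_square by (simp add: set_integrable_def)

context
  fixes s t :: real
  assumes sp: "s > 0" and tp: "t > 0"
begin

lemma Dn_bound:
  assumes x: "x > 0"
  shows "(1 + x\<^sup>2 + (ln x)\<^sup>2) * Dn s t x \<le>
     (6 * exp (25 * s\<^sup>2 / 2) / (s * sqrt (2 * pi))) * inverse (1 + x\<^sup>2)"
proof -
  define c where "c = s * sqrt (2 * pi)"
  have c: "c > 0" using sp by (simp add: c_def)
  define B where "B = 1 + x\<^sup>2 + (ln x)\<^sup>2"
  have B: "B \<ge> 0" by (simp add: B_def add_nonneg_nonneg)
  have "Dn s t x = exp (- t * x) * (exp (- (ln x)\<^sup>2 / (2 * s\<^sup>2)) / (x * c))"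
    using x by (simp add: Dn_def lognormal_density_def c_def mult.assoc)
  also have "\<dots> \<le> 1 * (exp (- (ln x)\<^sup>2 / (2 * s\<^sup>2)) / (x * c))"
    using tp x c by (intro mult_right_mono) auto
  also have "\<dots> \<le> exp (25 * s\<^sup>2 / 2) * exp (- 5 * \<bar>ln x\<bar>) / (x * c)"
    using gauss_tail[OF sp, of "ln x"] x c by (simp add: divide_right_mono)
  finally have d: "Dn s t x \<le> exp (25 * s\<^sup>2 / 2) * exp (- 5 * \<bar>ln x\<bar>) / (x * c)" .
  have "B * Dn s t x \<le> B * (exp (25 * s\<^sup>2 / 2) * exp (- 5 * \<bar>ln x\<bar>) / (x * c))"
    using d B by (rule mult_left_mono)
  also have "\<dots> = (exp (25 * s\<^sup>2 / 2) / c) * (B * exp (- 5 * \<bar>ln x\<bar>) / x)"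
    by (simp add: field_simps)
  also have "\<dots> \<le> (exp (25 * s\<^sup>2 / 2) / c) * (6 * inverse (1 + x\<^sup>2))"
    using poly_bound[OF x] c unfolding B_def by (intro mult_left_mono) auto
  finally show ?thesis unfolding B_def c_def by (simp add: field_simps)
qed

lemma integrable_Dn:
  assumes g[measurable]: "g \<in> borel_measurable borel"
  assumes b: "\<And>x. x > 0 \<Longrightarrow> \<bar>g x\<bar> \<le> k * (1 + x\<^sup>2 + (ln x)\<^sup>2)"
  shows "integrable lborel (\<lambda>x. g x * Dn s t x)"
proof -
  define K where "K = 6 * exp (25 * s\<^sup>2 / 2) / (s * sqrt (2 * pi))"
  have h1: "integrable lborel (\<lambda>x. \<bar>k\<bar> * K * inverse (1 + x\<^sup>2))"
    using integrable_inv_sq by simp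
  have h2: "(\<lambda>x. g x * Dn s t x) \<in> borel_measurable lborel" by measurable
  have h3: "AE x in lborel. norm (g x * Dn s t x) \<le> norm (\<bar>k\<bar> * K * inverse (1 + x\<^sup>2))"
  proof (rule AE_I2)
    fix x :: real
    have K: "K \<ge> 0" using sp by (simp add: K_def)
    have i: "inverse (1 + x\<^sup>2) \<ge> 0" by (simp add: add_pos_nonneg)
    show "norm (g x * Dn s t x) \<le> norm (\<bar>k\<bar> * K * inverse (1 + x\<^sup>2))"
    proof (cases "x > 0")
      case True
      have "\<bar>g x * Dn s t x\<bar> = \<bar>g x\<bar> * Dn s t x" using Dn_nonneg[OF sp] by (simp add: abs_mult)
      also have "\<dots> \<le> (\<bar>k\<bar> * (1 + x\<^sup>2 + (ln x)\<^sup>2)) * Dn s t x"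
      proof -
        have "k * (1 + x\<^sup>2 + (ln x)\<^sup>2) \<le> \<bar>k\<bar> * (1 + x\<^sup>2 + (ln x)\<^sup>2)"
          by (intro mult_right_mono) (auto simp: add_nonneg_nonneg)
        then show ?thesis using b[OF True] Dn_nonneg[OF sp, of t x] by (intro mult_right_mono) auto
      qed
      also have "\<dots> = \<bar>k\<bar> * ((1 + x\<^sup>2 + (ln x)\<^sup>2) * Dn s t x)" by simp
      also have "\<dots> \<le> \<bar>k\<bar> * (K * inverse (1 + x\<^sup>2))"
        using Dn_bound[OF True] unfolding K_def by (intro mult_left_mono) auto
      finally show ?thesis using K i by (simp add: abs_mult)
    next
      case False
      then show ?thesis using K i by (simp add: Dn_zero)
    qed
  qed
  show ?thesis by (rule Bochner_Integration.integrable_bound[OF h1 h2 h3])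
qed

lemma int_1: "integrable lborel (\<lambda>x. 1 * Dn s t x)"
  by (rule integrable_Dn[where k=1]) (auto simp: add_nonneg_nonneg)
lemma int_x: "integrable lborel (\<lambda>x. x * Dn s t x)"
proof (rule integrable_Dn[where k=1])
  fix x :: real assume "x > 0"
  have "0 \<le> (x - 1)\<^sup>2" by simp
  then have "2 * x \<le> 1 + x\<^sup>2" by (simp add: power2_eq_square algebra_simps)
  then have "x \<le> 1 + x\<^sup>2" using \<open>x > 0\<close> by linarith
  then have "x \<le> 1 + x\<^sup>2 + (ln x)\<^sup>2" using zero_le_power2[of "ln x"] by linarith
  then show "\<bar>x\<bar> \<le> 1 * (1 + x\<^sup>2 + (ln x)\<^sup>2)" using \<open>x > 0\<close> by simp
qed auto
lemma int_x2: "integrable lborel (\<lambda>x. x\<^sup>2 * Dn s t x)"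
  by (rule integrable_Dn[where k=1]) auto
lemma int_l: "integrable lborel (\<lambda>x. ln x * Dn s t x)"
proof (rule integrable_Dn[where k=1])
  fix x :: real assume "x > 0"
  have "0 \<le> (\<bar>ln x\<bar> - 1)\<^sup>2" by simp
  then have "2 * \<bar>ln x\<bar> \<le> 1 + \<bar>ln x\<bar>\<^sup>2" by (simp add: power2_eq_square algebra_simps)
  then have "\<bar>ln x\<bar> \<le> 1 + (ln x)\<^sup>2" by simp
  then have "\<bar>ln x\<bar> \<le> 1 + x\<^sup>2 + (ln x)\<^sup>2" using zero_le_power2[of x] by linarith
  then show "\<bar>ln x\<bar> \<le> 1 * (1 + x\<^sup>2 + (ln x)\<^sup>2)" by simp
qed auto
lemma int_l2: "integrable lborel (\<lambda>x. (ln x)\<^sup>2 * Dn s t x)"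
  by (rule integrable_Dn[where k=1]) auto
lemma int_xl: "integrable lborel (\<lambda>x. (x * ln x) * Dn s t x)"
proof (rule integrable_Dn[where k=1])
  fix x :: real assume "x > 0"
  have "0 \<le> (\<bar>x\<bar> - \<bar>ln x\<bar>)\<^sup>2" by simp
  then have "2 * (\<bar>x\<bar> * \<bar>ln x\<bar>) \<le> \<bar>x\<bar>\<^sup>2 + \<bar>ln x\<bar>\<^sup>2" by (simp add: power2_eq_square algebra_simps)
  then have "2 * \<bar>x * ln x\<bar> \<le> x\<^sup>2 + (ln x)\<^sup>2" by (simp add: abs_mult)
  then show "\<bar>x * ln x\<bar> \<le> 1 * (1 + x\<^sup>2 + (ln x)\<^sup>2)" by simp
qed auto

end


definition Jm :: "real \<Rightarrow> real \<Rightarrow> (real \<Rightarrow> real) \<Rightarrow> real" where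
  "Jm s t g = lebesgue_integral lborel (\<lambda>x. g x * Dn s t x)"

definition "pol a0 a1 a2 a3 a4 a5 x = (a0 + a1 * x + a2 * x\<^sup>2 + a3 * ln x + a4 * (ln x)\<^sup>2 + a5 * (x * ln x) :: real)"

context
  fixes s t :: real
  assumes sp: "s > 0" and tp: "t > 0"
begin

lemma J_lin_hb:
  "has_bochner_integral lborel (\<lambda>x. pol a0 a1 a2 a3 a4 a5 x * Dn s t x)
     (a0 * Jm s t (\<lambda>x. 1) + a1 * Jm s t (\<lambda>x. x) + a2 * Jm s t (\<lambda>x. x\<^sup>2) + a3 * Jm s t ln
       + a4 * Jm s t (\<lambda>x. (ln x)\<^sup>2) + a5 * Jm s t (\<lambda>x. x * ln x))"
proof -
  have "has_bochner_integral lborel (\<lambda>x. a0 * (1 * Dn s t x) + a1 * (x * Dn s t x) + a2 * (x\<^sup>2 * Dn s t x)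
     + a3 * (ln x * Dn s t x) + a4 * ((ln x)\<^sup>2 * Dn s t x) + a5 * ((x * ln x) * Dn s t x))
     (a0 * Jm s t (\<lambda>x. 1) + a1 * Jm s t (\<lambda>x. x) + a2 * Jm s t (\<lambda>x. x\<^sup>2) + a3 * Jm s t ln
       + a4 * Jm s t (\<lambda>x. (ln x)\<^sup>2) + a5 * Jm s t (\<lambda>x. x * ln x))"
    unfolding Jm_def
    by (intro has_bochner_integral_add has_bochner_integral_mult_right has_bochner_integral_integrable
        int_1[OF sp tp] int_x[OF sp tp] int_x2[OF sp tp] int_l[OF sp tp] int_l2[OF sp tp] int_xl[OF sp tp])
  moreover have "(\<lambda>x. a0 * (1 * Dn s t x) + a1 * (x * Dn s t x) + a2 * (x\<^sup>2 * Dn s t x)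
     + a3 * (ln x * Dn s t x) + a4 * ((ln x)\<^sup>2 * Dn s t x) + a5 * ((x * ln x) * Dn s t x))
     = (\<lambda>x. pol a0 a1 a2 a3 a4 a5 x * Dn s t x)"
    by (auto simp: pol_def algebra_simps)
  ultimately show ?thesis by simp
qed

lemma J_lin: "lebesgue_integral lborel (\<lambda>x. pol a0 a1 a2 a3 a4 a5 x * Dn s t x) =
     a0 * Jm s t (\<lambda>x. 1) + a1 * Jm s t (\<lambda>x. x) + a2 * Jm s t (\<lambda>x. x\<^sup>2) + a3 * Jm s t ln
       + a4 * Jm s t (\<lambda>x. (ln x)\<^sup>2) + a5 * Jm s t (\<lambda>x. x * ln x)"
  using J_lin_hb by (rule has_bochner_integral_integral_eq)

lemma J_int: "integrable lborel (\<lambda>x. pol a0 a1 a2 a3 a4 a5 x * Dn s t x)"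
  by (rule integrable.intros[OF J_lin_hb])

lemma J_nonneg:
  assumes "\<And>x. x > 0 \<Longrightarrow> 0 \<le> pol a0 a1 a2 a3 a4 a5 x"
  shows "0 \<le> a0 * Jm s t (\<lambda>x. 1) + a1 * Jm s t (\<lambda>x. x) + a2 * Jm s t (\<lambda>x. x\<^sup>2) + a3 * Jm s t ln
       + a4 * Jm s t (\<lambda>x. (ln x)\<^sup>2) + a5 * Jm s t (\<lambda>x. x * ln x)"
proof -
  have "0 \<le> lebesgue_integral lborel (\<lambda>x. pol a0 a1 a2 a3 a4 a5 x * Dn s t x)"
  proof (rule integral_nonneg_AE, rule AE_I2)
    fix x :: real
    show "0 \<le> pol a0 a1 a2 a3 a4 a5 x * Dn s t x"
      using assms[of x] Dn_nonneg[OF sp, of t x] by (cases "x > 0") (auto simp: Dn_zero)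
  qed
  then show ?thesis by (simp only: J_lin)
qed

lemma stein:
  fixes F f g :: "real \<Rightarrow> real"
  assumes F: "\<And>x. x > 0 \<Longrightarrow> (F has_real_derivative f x) (at x)"
    and cont: "\<And>x. x > 0 \<Longrightarrow> isCont f x"
    and lim0: "(F \<longlongrightarrow> 0) (at_right 0)" and limi: "(F \<longlongrightarrow> 0) at_top"
    and eq: "\<And>x. indicator {0<..} x * f x = g x"
    and int: "integrable lborel g"
  shows "lebesgue_integral lborel g = 0"
proof -
  have ei: "einterval 0 \<infinity> = {0::real<..}" by (auto simp: einterval_def zero_ereal_def)
  have si: "set_integrable lborel (einterval 0 \<infinity>) f"
    unfolding set_integrable_def ei using int eq by simp
  have "(LBINT x=0..\<infinity>. f x) = 0 - 0"
  proof (rule interval_integral_FTC_integrable[where F = F])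
    show "(0::ereal) < \<infinity>" by simp
    show "(F has_vector_derivative f x) (at x)" if "0 < ereal x" "ereal x < \<infinity>" for x
      using F[of x] that by (simp add: has_real_derivative_iff_has_vector_derivative zero_ereal_def)
    show "isCont f x" if "0 < ereal x" "ereal x < \<infinity>" for x
      using cont[of x] that by (simp add: zero_ereal_def)
    show "set_integrable lborel (einterval 0 \<infinity>) f" by (rule si)
    show "((F \<circ> real_of_ereal) \<longlongrightarrow> 0) (at_right 0)"
      using lim0 by (simp add: zero_ereal_def ereal_tendsto_simps1)
    show "((F \<circ> real_of_ereal) \<longlongrightarrow> 0) (at_left \<infinity>)"
      using limi by (simp add: ereal_tendsto_simps1)
  qed
  moreover have "(LBINT x=0..\<infinity>. f x) = lebesgue_integral lborel g"
    using interval_integral_to_infinity_eq[where a=0 and M=lborel and f=f] eq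
    by (simp add: zero_ereal_def set_lebesgue_integral_def)
  ultimately show ?thesis by simp
qed

end


context
  fixes s t :: real
  assumes sp: "s > 0" and tp: "t > 0"
begin

definition "rr x = exp (- t * x + - (ln x)\<^sup>2 / (2 * s\<^sup>2))"
definition "cc = s * sqrt (2 * pi)"

lemma cc_pos: "cc > 0" using sp by (simp add: cc_def)

lemma rr_Dn: "x > 0 \<Longrightarrow> rr x = cc * x * Dn s t x"
  using Dn_r[OF sp, of x t] cc_pos sp by (simp add: rr_def cc_def field_simps)

lemma rr_deriv: "x > 0 \<Longrightarrow> (rr has_real_derivative rr x * (- t - ln x / (s\<^sup>2 * x))) (at x)"
  unfolding rr_def using sp
  by (auto intro!: derivative_eq_intros simp: field_simps power2_eq_square)

lemma rr_cont: "x > 0 \<Longrightarrow> isCont rr x"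
  unfolding rr_def using sp by (intro continuous_intros) auto

lemma lim_r0: "(rr \<longlongrightarrow> 0) (at_right 0)" unfolding rr_def using sp tp by real_asymp
lemma lim_ri: "(rr \<longlongrightarrow> 0) at_top" unfolding rr_def using sp tp by real_asymp
lemma lim_lr0: "((\<lambda>x. ln x * rr x) \<longlongrightarrow> 0) (at_right 0)" unfolding rr_def using sp tp by real_asymp
lemma lim_lri: "((\<lambda>x. ln x * rr x) \<longlongrightarrow> 0) at_top" unfolding rr_def using sp tp by real_asymp
lemma lim_xr0: "((\<lambda>x. x * rr x) \<longlongrightarrow> 0) (at_right 0)" unfolding rr_def using sp tp by real_asymp
lemma lim_xri: "((\<lambda>x. x * rr x) \<longlongrightarrow> 0) at_top" unfolding rr_def using sp tp by real_asymp

lemma stein1: "t * Jm s t (\<lambda>x. x) + Jm s t ln / s\<^sup>2 = 0"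
proof -
  have "lebesgue_integral lborel (\<lambda>x. pol 0 (- cc * t) 0 (- cc / s\<^sup>2) 0 0 x * Dn s t x) = 0"
  proof (rule stein[OF sp tp, where F = rr and f = "\<lambda>x. rr x * (- t - ln x / (s\<^sup>2 * x))"])
    show "(rr has_real_derivative rr x * (- t - ln x / (s\<^sup>2 * x))) (at x)" if "x > 0" for x
      using rr_deriv[OF that] .
    show "isCont (\<lambda>x. rr x * (- t - ln x / (s\<^sup>2 * x))) x" if "x > 0" for x
      using that rr_cont[OF that] sp by (intro continuous_intros) auto
    show "(rr \<longlongrightarrow> 0) (at_right 0)" by (rule lim_r0)
    show "(rr \<longlongrightarrow> 0) at_top" by (rule lim_ri)
    show "indicator {0<..} x * (rr x * (- t - ln x / (s\<^sup>2 * x))) =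
          pol 0 (- cc * t) 0 (- cc / s\<^sup>2) 0 0 x * Dn s t x" for x
      using sp cc_pos
      by (cases "x > 0") (auto simp: rr_Dn Dn_zero pol_def field_simps)
    show "integrable lborel (\<lambda>x. pol 0 (- cc * t) 0 (- cc / s\<^sup>2) 0 0 x * Dn s t x)"
      by (rule J_int[OF sp tp])
  qed
  then have "- cc * (t * Jm s t (\<lambda>x. x) + Jm s t ln / s\<^sup>2) = 0"
    unfolding J_lin[OF sp tp] by (simp add: field_simps)
  then show ?thesis using cc_pos by simp
qed

lemma stein2: "t * Jm s t (\<lambda>x. x * ln x) + Jm s t (\<lambda>x. (ln x)\<^sup>2) / s\<^sup>2 = Jm s t (\<lambda>x. 1)"
proof -
  let ?f = "\<lambda>x. rr x / x + ln x * (rr x * (- t - ln x / (s\<^sup>2 * x)))"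
  have "lebesgue_integral lborel (\<lambda>x. pol cc 0 0 0 (- cc / s\<^sup>2) (- cc * t) x * Dn s t x) = 0"
  proof (rule stein[OF sp tp, where F = "\<lambda>x. ln x * rr x" and f = ?f])
    show "((\<lambda>x. ln x * rr x) has_real_derivative ?f x) (at x)" if "x > 0" for x
      using that by (auto intro!: derivative_eq_intros rr_deriv simp: field_simps)
    show "isCont ?f x" if "x > 0" for x
      using that rr_cont[OF that] sp by (intro continuous_intros) auto
    show "((\<lambda>x. ln x * rr x) \<longlongrightarrow> 0) (at_right 0)" by (rule lim_lr0)
    show "((\<lambda>x. ln x * rr x) \<longlongrightarrow> 0) at_top" by (rule lim_lri)
    show "indicator {0<..} x * ?f x = pol cc 0 0 0 (- cc / s\<^sup>2) (- cc * t) x * Dn s t x" for x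
      using sp cc_pos
      by (cases "x > 0") (auto simp: rr_Dn Dn_zero pol_def field_simps power2_eq_square)
    show "integrable lborel (\<lambda>x. pol cc 0 0 0 (- cc / s\<^sup>2) (- cc * t) x * Dn s t x)"
      by (rule J_int[OF sp tp])
  qed
  then have "cc * (Jm s t (\<lambda>x. 1) - t * Jm s t (\<lambda>x. x * ln x) - Jm s t (\<lambda>x. (ln x)\<^sup>2) / s\<^sup>2) = 0"
    unfolding J_lin[OF sp tp] by (simp add: field_simps)
  then show ?thesis using cc_pos by simp
qed

lemma stein3: "Jm s t (\<lambda>x. x) = t * Jm s t (\<lambda>x. x\<^sup>2) + Jm s t (\<lambda>x. x * ln x) / s\<^sup>2"
proof -
  let ?f = "\<lambda>x. rr x + x * (rr x * (- t - ln x / (s\<^sup>2 * x)))"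
  have "lebesgue_integral lborel (\<lambda>x. pol 0 cc (- cc * t) 0 0 (- cc / s\<^sup>2) x * Dn s t x) = 0"
  proof (rule stein[OF sp tp, where F = "\<lambda>x. x * rr x" and f = ?f])
    show "((\<lambda>x. x * rr x) has_real_derivative ?f x) (at x)" if "x > 0" for x
      using that by (auto intro!: derivative_eq_intros rr_deriv simp: field_simps)
    show "isCont ?f x" if "x > 0" for x
      using that rr_cont[OF that] sp by (intro continuous_intros) auto
    show "((\<lambda>x. x * rr x) \<longlongrightarrow> 0) (at_right 0)" by (rule lim_xr0)
    show "((\<lambda>x. x * rr x) \<longlongrightarrow> 0) at_top" by (rule lim_xri)
    show "indicator {0<..} x * ?f x = pol 0 cc (- cc * t) 0 0 (- cc / s\<^sup>2) x * Dn s t x" for x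
      using sp cc_pos
      by (cases "x > 0") (auto simp: rr_Dn Dn_zero pol_def field_simps power2_eq_square)
    show "integrable lborel (\<lambda>x. pol 0 cc (- cc * t) 0 0 (- cc / s\<^sup>2) x * Dn s t x)"
      by (rule J_int[OF sp tp])
  qed
  then have "cc * (Jm s t (\<lambda>x. x) - t * Jm s t (\<lambda>x. x\<^sup>2) - Jm s t (\<lambda>x. x * ln x) / s\<^sup>2) = 0"
    unfolding J_lin[OF sp tp] by (simp add: field_simps)
  then show ?thesis using cc_pos by simp
qed

end


lemma key_algebra:
  fixes S W m th a b c2 d e ep :: real
  assumes ep: "ep > 0" "ep * ep * W = 1" and S: "S > 0" and W1: "W \<ge> 1" and m: "m > 0" and th: "th * S * m = W"
    and i1: "th * a + b / S = 0" and i2: "th * d + c2 / S = 1" and i3: "a = th * e + d / S"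
    and p1: "0 \<le> - W * m + W * a - m * b + d"
    and pa1: "0 \<le> (W + 1)\<^sup>2 + 2 * (W + 1) * b + c2"
    and pa2: "0 \<le> (W + -1)\<^sup>2 + 2 * (W + -1) * b + c2"
    and p3: "\<And>k. k = 1 \<or> k = -1 \<Longrightarrow> 0 \<le> (ep\<^sup>2 * W\<^sup>2 + 2 * k * ep * W * a / m + a\<^sup>2 / m\<^sup>2)
        + (- 2 * k * ep * W / m - 2 * a / m\<^sup>2) * a + (1 / m\<^sup>2) * e
        + (2 * ep\<^sup>2 * W + 2 * k * ep * a / m) * b + ep\<^sup>2 * c2
        + (- 2 * k * ep / m) * d"
  shows "\<bar>a / m - 1\<bar> \<le> (S + 1) / (2 * W)"
    and "\<bar>W * (e - a\<^sup>2) / (S * m\<^sup>2) - a / m\<bar> \<le> (2 + (S + 1) / 2) * ep"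
proof -
  define q where "q = a / m"
  define P where "P = c2 + 2 * W * b + W\<^sup>2"
  define c where "c = (d - a * b) / m"
  define V where "V = e - a\<^sup>2"
  define r where "r = ep * W"
  have Wp: "W > 0" using W1 by simp
  have rep: "r * ep = 1" using ep by (simp add: r_def algebra_simps)
  have r: "r \<ge> 1" "r > 0"
  proof -
    have "ep \<le> 1"
    proof (rule ccontr)
      assume "\<not> ep \<le> 1"
      then have "1 * 1 * 1 < ep * ep * W" using W1 by (intro mult_strict_mono mult_less_le_imp_less) auto
      then show False using ep by simp
    qed
    then show "r \<ge> 1" using rep ep
      by (metis mult.commute mult_le_cancel_left1 mult_le_cancel_right1 order_trans not_le)
    then show "r > 0" by simp
  qed
  have thv: "th = W / (S * m)" using th S m by (simp add: field_simps)
  have h1: "W * q = - b"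
  proof -
    have "W * a / (S * m) = - b / S" using i1 unfolding thv by (simp add: field_simps)
    then show ?thesis using S m by (simp add: q_def field_simps)
  qed
  have h2: "W * d / m + c2 = S"
  proof -
    have "W * d / (S * m) + c2 / S = 1" using i2 unfolding thv by (simp add: field_simps)
    then show ?thesis using S m by (simp add: field_simps)
  qed
  have h3: "P \<le> S"
  proof -
    have "0 \<le> (W / m) * (- W * m + W * a - m * b + d)" using p1 Wp m by simp
    also have "\<dots> = - W * W + W * (W * q) - W * b + W * d / m"
      using m by (simp add: q_def field_simps)
    finally show ?thesis using h1 h2 unfolding P_def by (simp add: power2_eq_square algebra_simps)
  qed
  have h4: "\<bar>b + W\<bar> \<le> (S + 1) / 2"
  proof -
    have e1: "(W + 1)\<^sup>2 + 2 * (W + 1) * b + c2 = P + 2 * (b + W) + 1"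
      unfolding P_def by (simp add: power2_eq_square algebra_simps)
    have e2: "(W + -1)\<^sup>2 + 2 * (W + -1) * b + c2 = P - 2 * (b + W) + 1"
      unfolding P_def by (simp add: power2_eq_square algebra_simps)
    have f1: "0 \<le> P + 2 * (b + W) + 1" using pa1 unfolding e1 .
    have f2: "0 \<le> P - 2 * (b + W) + 1" using pa2 unfolding e2 .
    have "b + W \<le> (S + 1) / 2" using f1 f2 h3 by argo
    moreover have "- ((S + 1) / 2) \<le> b + W" using f1 f2 h3 by argo
    ultimately show ?thesis by (simp only: abs_le_iff) argo
  qed
  have h5: "q - 1 = - (b + W) / W" using h1 Wp by (simp add: field_simps)
  show g1: "\<bar>a / m - 1\<bar> \<le> (S + 1) / (2 * W)"
  proof -
    have "\<bar>q - 1\<bar> = \<bar>b + W\<bar> / W" using h5 Wp by (simp add: abs_minus_commute)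
    also have "\<dots> \<le> ((S + 1) / 2) / W" using h4 Wp by (intro divide_right_mono) auto
    finally show ?thesis by (simp add: q_def)
  qed
  have h6: "W * V / (S * m\<^sup>2) = q - c / S"
  proof -
    have e: "e = (a * S - d) * m / W" using i3 Wp S m unfolding thv by (simp add: field_simps)
    have "W * a\<^sup>2 / (S * m\<^sup>2) = q * (W * q) / S" using m by (simp add: q_def power2_eq_square field_simps)
    also have "\<dots> = - a * b / (S * m)" using h1 m by (simp add: q_def field_simps)
    finally have x: "W * a\<^sup>2 / (S * m\<^sup>2) = - a * b / (S * m)" .
    have "W * V / (S * m\<^sup>2) = W * e / (S * m\<^sup>2) - W * a\<^sup>2 / (S * m\<^sup>2)"
      by (simp add: V_def right_diff_distrib diff_divide_distrib)
    also have "W * e / (S * m\<^sup>2) = q - d / (S * m)"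
      unfolding e using Wp S m by (simp add: q_def power2_eq_square field_simps)
    finally show ?thesis unfolding x c_def using S m by (simp add: field_simps)
  qed
  have h7: "V / m\<^sup>2 = (S * q - c) / W"
  proof -
    have "V / m\<^sup>2 = (S / W) * (W * V / (S * m\<^sup>2))" using S Wp m by (simp add: field_simps)
    also have "\<dots> = (S * q - c) / W" unfolding h6 using S Wp by (simp add: field_simps)
    finally show ?thesis .
  qed
  have p3': "0 \<le> ep * ep * P - 2 * k * ep * c + V / m\<^sup>2" if k: "k = 1 \<or> k = -1" for k
  proof -
    have "(ep\<^sup>2 * W\<^sup>2 + 2 * k * ep * W * a / m + a\<^sup>2 / m\<^sup>2)
        + (- 2 * k * ep * W / m - 2 * a / m\<^sup>2) * a + (1 / m\<^sup>2) * e
        + (2 * ep\<^sup>2 * W + 2 * k * ep * a / m) * b + ep\<^sup>2 * c2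
        + (- 2 * k * ep / m) * d = ep * ep * P - 2 * k * ep * c + V / m\<^sup>2"
      using m unfolding P_def c_def V_def
      by (simp add: field_simps power2_eq_square)
    then show ?thesis using p3[OF k] by simp
  qed
  have h8: "2 * \<bar>c\<bar> * r \<le> S + S * q + \<bar>c\<bar>"
  proof -
    have A: "2 * k * ep * c \<le> ep * ep * P + V / m\<^sup>2" if "k = 1 \<or> k = -1" for k
      using p3'[OF that] by simp
    have "2 * ep * \<bar>c\<bar> \<le> ep * ep * P + V / m\<^sup>2"
      using A[of 1] A[of "-1"] by (cases "c \<ge> 0") auto
    also have "\<dots> \<le> ep * ep * S + (S * q + \<bar>c\<bar>) / W"
      unfolding h7 using h3 Wp ep by (intro add_mono divide_right_mono mult_left_mono) auto
    finally have B: "2 * ep * \<bar>c\<bar> \<le> ep * ep * S + (S * q + \<bar>c\<bar>) / W" .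
    have "(2 * ep * \<bar>c\<bar>) * W \<le> (ep * ep * S + (S * q + \<bar>c\<bar>) / W) * W"
      using B Wp by (intro mult_right_mono) auto
    moreover have "(2 * ep * \<bar>c\<bar>) * W = 2 * \<bar>c\<bar> * r" by (simp add: r_def)
    moreover have "(ep * ep * S + (S * q + \<bar>c\<bar>) / W) * W = S + S * q + \<bar>c\<bar>"
    proof -
      have "(ep * ep * S + (S * q + \<bar>c\<bar>) / W) * W = (ep * ep * W) * S + (S * q + \<bar>c\<bar>)"
        using Wp by (simp add: field_simps)
      then show ?thesis using ep by simp
    qed
    ultimately show ?thesis by simp
  qed
  have h9: "\<bar>c\<bar> * r \<le> S * (1 + q)"
  proof -
    have "\<bar>c\<bar> \<le> \<bar>c\<bar> * r" using r by (simp add: mult_le_cancel_left1)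
    then show ?thesis using h8 by (simp add: algebra_simps)
  qed
  have qb: "q \<le> 1 + (S + 1) / 2"
  proof -
    have "(S + 1) / (2 * W) \<le> (S + 1) / 2" using S W1 by (intro divide_left_mono) auto
    moreover have "q - 1 \<le> (S + 1) / (2 * W)" using abs_le_D1[OF g1] unfolding q_def .
    ultimately show ?thesis by argo
  qed
  show "\<bar>W * (e - a\<^sup>2) / (S * m\<^sup>2) - a / m\<bar> \<le> (2 + (S + 1) / 2) * ep"
  proof -
    have "\<bar>W * (e - a\<^sup>2) / (S * m\<^sup>2) - a / m\<bar> = \<bar>c\<bar> / S"
      using h6 S unfolding V_def q_def by simp
    also have "\<dots> \<le> (1 + q) * ep"
    proof -
      have "\<bar>c\<bar> * r * ep \<le> S * (1 + q) * ep" using h9 ep by (intro mult_right_mono) auto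
      moreover have "\<bar>c\<bar> * r * ep = \<bar>c\<bar>" using rep by (simp add: mult.assoc)
      ultimately have "\<bar>c\<bar> \<le> S * (1 + q) * ep" by simp
      then have "\<bar>c\<bar> \<le> S * ((1 + q) * ep)" by (simp only: mult.assoc)
      then show ?thesis using S by (simp add: field_simps)
    qed
    also have "\<dots> \<le> (2 + (S + 1) / 2) * ep"
      using qb ep by (intro mult_right_mono) auto
    finally show ?thesis .
  qed
qed



context
  fixes s t :: real
  assumes sp: "s > 0" and tp: "t > 0"
begin

abbreviation "J0 \<equiv> Jm s t (\<lambda>x. 1)"
abbreviation "J1 \<equiv> Jm s t (\<lambda>x. x)"
abbreviation "J2 \<equiv> Jm s t (\<lambda>x. x\<^sup>2)"
abbreviation "Jl \<equiv> Jm s t ln"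
abbreviation "Jll \<equiv> Jm s t (\<lambda>x. (ln x)\<^sup>2)"
abbreviation "Jxl \<equiv> Jm s t (\<lambda>x. x * ln x)"

lemma laplace_eq: "lognormal_laplace s t = J0"
proof -
  have "(\<lambda>x. indicator {0<..} x *\<^sub>R (exp (- t * x) * lognormal_density s x)) = (\<lambda>x. 1 * Dn s t x)"
    by (rule ext) (auto simp: Dn_def lognormal_density_def indicator_def)
  then show ?thesis unfolding lognormal_laplace_def set_lebesgue_integral_def Jm_def by simp
qed

lemma J0_pos: "J0 > 0"
proof -
  have int: "integrable lborel (\<lambda>x. 1 * Dn s t x)" by (rule int_1[OF sp tp])
  have nn: "AE x in lborel. 0 \<le> 1 * Dn s t x" using Dn_nonneg[OF sp] by simp
  have ge: "J0 \<ge> 0" unfolding Jm_def using nn by (intro integral_nonneg_AE) auto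
  show ?thesis
  proof (rule ccontr)
    assume "\<not> J0 > 0"
    then have "J0 = 0" using ge by simp
    then have "AE x in lborel. 1 * Dn s t x = 0"
      using integral_nonneg_eq_0_iff_AE[OF int nn] unfolding Jm_def by simp
    then have "AE x in lborel. x \<notin> {0<..1::real}"
    proof eventually_elim
      case (elim x)
      show ?case
      proof
        assume "x \<in> {0<..1}"
        then have "Dn s t x > 0" using Dn_pos[OF sp] by simp
        with elim show False by simp
      qed
    qed
    then have "emeasure lborel {0<..1::real} = 0"
      by (subst AE_iff_measurable[symmetric, where P = "\<lambda>x. x \<notin> {0<..1::real}"]) auto
    then show False by simp
  qed
qed

lemma tilted_density_eq: "tilted_density s t = (\<lambda>x. Dn s t x / J0)"
proof
  fix x
  have "exp (- t * x - lognormal_kappa s t) = exp (- t * x) / J0"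
    unfolding lognormal_kappa_def laplace_eq using J0_pos by (simp add: exp_diff)
  then show "tilted_density s t x = Dn s t x / J0"
    unfolding tilted_density_def Dn_def by simp
qed

lemma tilted_integral: 
  assumes [measurable]: "g \<in> borel_measurable borel"
  shows "integral\<^sup>L (tilted_measure s t) g = Jm s t g / J0"
proof -
  have "integral\<^sup>L (tilted_measure s t) g = integral\<^sup>L lborel (\<lambda>x. (Dn s t x / J0) *\<^sub>R g x)"
    unfolding tilted_measure_def tilted_density_eq
    by (rule integral_density) (use Dn_nonneg[OF sp] J0_pos in auto)
  also have "\<dots> = integral\<^sup>L lborel (\<lambda>x. (g x * Dn s t x) / J0)"
    by (simp add: mult.commute)
  also have "\<dots> = Jm s t g / J0" unfolding Jm_def by simp
  finally show ?thesis .
qed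

lemma mean_eq: "tilted_mean s t = J1 / J0"
  unfolding tilted_mean_def by (rule tilted_integral) auto

lemma var_eq: "tilted_var s t = J2 / J0 - (J1 / J0)\<^sup>2"
proof -
  define A where "A = J1 / J0"
  have "tilted_var s t = Jm s t (\<lambda>x. (x - A)\<^sup>2) / J0"
    unfolding tilted_var_def mean_eq A_def by (rule tilted_integral) auto
  also have "Jm s t (\<lambda>x. (x - A)\<^sup>2) = lebesgue_integral lborel (\<lambda>x. pol (A\<^sup>2) (- 2 * A) 1 0 0 0 x * Dn s t x)"
    unfolding Jm_def by (rule arg_cong[where f = "lebesgue_integral lborel"], rule ext)
      (simp add: pol_def power2_eq_square algebra_simps)
  also have "\<dots> = A\<^sup>2 * J0 - 2 * A * J1 + J2" unfolding J_lin[OF sp tp] by simp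
  finally show ?thesis using J0_pos unfolding A_def by (simp add: field_simps power2_eq_square)
qed

lemma nonneg_n:
  assumes "\<And>x. x > 0 \<Longrightarrow> 0 \<le> pol a0 a1 a2 a3 a4 a5 x"
  shows "0 \<le> a0 + a1 * (J1 / J0) + a2 * (J2 / J0) + a3 * (Jl / J0) + a4 * (Jll / J0) + a5 * (Jxl / J0)"
proof -
  have "0 \<le> (a0 * J0 + a1 * J1 + a2 * J2 + a3 * Jl + a4 * Jll + a5 * Jxl) / J0"
    using J_nonneg[OF sp tp assms] J0_pos by simp
  also have "\<dots> = a0 + a1 * (J1 / J0) + a2 * (J2 / J0) + a3 * (Jl / J0) + a4 * (Jll / J0) + a5 * (Jxl / J0)"
    using J0_pos by (simp add: field_simps)
  finally show ?thesis .
qed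

lemma per_theta:
  assumes W1: "lambertW (t * s\<^sup>2) \<ge> 1"
  shows "\<bar>tilted_mean s t / exp (- lambertW (t * s\<^sup>2)) - 1\<bar> \<le> (s\<^sup>2 + 1) / (2 * lambertW (t * s\<^sup>2))
    \<and> \<bar>lambertW (t * s\<^sup>2) * tilted_var s t / (s\<^sup>2 * (exp (- lambertW (t * s\<^sup>2)))\<^sup>2)
         - tilted_mean s t / exp (- lambertW (t * s\<^sup>2))\<bar>
       \<le> (2 + (s\<^sup>2 + 1) / 2) * (1 / sqrt (lambertW (t * s\<^sup>2)))"
proof -
  define W where "W = lambertW (t * s\<^sup>2)"
  define m where "m = exp (- W)"
  define ep where "ep = 1 / sqrt W"
  have Wp: "W > 0" using W1 by (simp add: W_def)
  have WW: "W * exp W = t * s\<^sup>2" using lambertW_props[of "t * s\<^sup>2"] sp tp by (simp add: W_def)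
  have m: "m > 0" by (simp add: m_def)
  have th: "t * s\<^sup>2 * m = W"
  proof -
    have "t * s\<^sup>2 * m = W * exp W * exp (- W)" using WW by (simp add: m_def)
    also have "\<dots> = W" by (simp add: exp_minus)
    finally show ?thesis .
  qed
  have ep: "ep > 0" "ep * ep * W = 1" using Wp by (auto simp: ep_def)
  define a where "a = J1 / J0"
  define b where "b = Jl / J0"
  define c2 where "c2 = Jll / J0"
  define d where "d = Jxl / J0"
  define e where "e = J2 / J0"
  have J0: "J0 > 0" by (rule J0_pos)
  have i1: "t * a + b / s\<^sup>2 = 0"
  proof -
    have "(t * J1 + Jl / s\<^sup>2) / J0 = 0" using stein1[OF sp tp] by simp
    then show ?thesis using J0 by (simp add: a_def b_def field_simps)
  qed
  have i2: "t * d + c2 / s\<^sup>2 = 1"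
  proof -
    have "t * d + c2 / s\<^sup>2 = (t * Jxl + Jll / s\<^sup>2) / J0"
      using J0 sp unfolding c2_def d_def by (simp add: field_simps)
    also have "\<dots> = J0 / J0" by (simp only: stein2[OF sp tp])
    also have "\<dots> = 1" using J0 by simp
    finally show ?thesis .
  qed
  have i3: "a = t * e + d / s\<^sup>2"
  proof -
    have "J1 / J0 = (t * J2 + Jxl / s\<^sup>2) / J0" using stein3[OF sp tp] by simp
    then show ?thesis using J0 by (simp add: a_def d_def e_def field_simps)
  qed
  have p1: "0 \<le> - W * m + W * a - m * b + d"
  proof -
    have "0 \<le> - W * m + W * (J1 / J0) + 0 * (J2 / J0) + (- m) * (Jl / J0) + 0 * (Jll / J0) + 1 * (Jxl / J0)"
    proof (rule nonneg_n)
      fix x :: real assume x: "x > 0"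
      have eq: "pol (- W * m) W 0 (- m) 0 1 x = (ln x + W) * (x - m)"
        by (simp add: pol_def algebra_simps)
      show "0 \<le> pol (- W * m) W 0 (- m) 0 1 x"
      proof (cases "ln x + W \<ge> 0")
        case True
        then have "ln x \<ge> - W" by simp
        then have "exp (ln x) \<ge> exp (- W)" by simp
        then have "x \<ge> m" using x by (simp add: m_def)
        then show ?thesis unfolding eq using True by simp
      next
        case False
        then have "ln x < - W" by simp
        then have "exp (ln x) < exp (- W)" by simp
        then have "x < m" using x by (simp add: m_def)
        then show ?thesis unfolding eq using False by (intro mult_nonpos_nonpos) auto
      qed
    qed
    then show ?thesis by (simp add: a_def b_def d_def)
  qed
  have pa: "0 \<le> (W + k)\<^sup>2 + 2 * (W + k) * b + c2" for k
  proof -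
    have "0 \<le> (W + k)\<^sup>2 + 0 * (J1 / J0) + 0 * (J2 / J0) + (2 * (W + k)) * (Jl / J0) + 1 * (Jll / J0) + 0 * (Jxl / J0)"
    proof (rule nonneg_n)
      fix x :: real
      have "pol ((W + k)\<^sup>2) 0 0 (2 * (W + k)) 1 0 x = (ln x + (W + k))\<^sup>2"
        by (simp add: pol_def power2_eq_square algebra_simps)
      then show "0 \<le> pol ((W + k)\<^sup>2) 0 0 (2 * (W + k)) 1 0 x" by simp
    qed
    then show ?thesis by (simp add: b_def c2_def)
  qed
  have p3: "0 \<le> (ep\<^sup>2 * W\<^sup>2 + 2 * k * ep * W * a / m + a\<^sup>2 / m\<^sup>2)
        + (- 2 * k * ep * W / m - 2 * a / m\<^sup>2) * a + (1 / m\<^sup>2) * e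
        + (2 * ep\<^sup>2 * W + 2 * k * ep * a / m) * b + ep\<^sup>2 * c2
        + (- 2 * k * ep / m) * d" if k: "k = 1 \<or> k = -1" for k
  proof -
    have kk: "k * k = 1" using k by auto
    have "0 \<le> (ep\<^sup>2 * W\<^sup>2 + 2 * k * ep * W * a / m + a\<^sup>2 / m\<^sup>2)
        + (- 2 * k * ep * W / m - 2 * a / m\<^sup>2) * (J1 / J0) + (1 / m\<^sup>2) * (J2 / J0)
        + (2 * ep\<^sup>2 * W + 2 * k * ep * a / m) * (Jl / J0) + ep\<^sup>2 * (Jll / J0)
        + (- 2 * k * ep / m) * (Jxl / J0)"
    proof (rule nonneg_n)
      fix x :: real
      have "pol (ep\<^sup>2 * W\<^sup>2 + 2 * k * ep * W * a / m + a\<^sup>2 / m\<^sup>2) (- 2 * k * ep * W / m - 2 * a / m\<^sup>2)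
          (1 / m\<^sup>2) (2 * ep\<^sup>2 * W + 2 * k * ep * a / m) (ep\<^sup>2) (- 2 * k * ep / m) x
          = (ep * (ln x + W) - k * (x - a) / m)\<^sup>2"
        using k m by (elim disjE) (simp_all add: pol_def power2_eq_square field_simps)
      then show "0 \<le> pol (ep\<^sup>2 * W\<^sup>2 + 2 * k * ep * W * a / m + a\<^sup>2 / m\<^sup>2) (- 2 * k * ep * W / m - 2 * a / m\<^sup>2)
          (1 / m\<^sup>2) (2 * ep\<^sup>2 * W + 2 * k * ep * a / m) (ep\<^sup>2) (- 2 * k * ep / m) x" by simp
    qed
    then show ?thesis by (simp add: a_def b_def c2_def d_def e_def)
  qed
  have S: "s\<^sup>2 > 0" using sp by simp
  note K = key_algebra[OF ep S W1[folded W_def] m th i1 i2 i3 p1 pa[of 1] pa[of "-1"] p3]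
  have "tilted_mean s t = a" by (simp add: mean_eq a_def)
  moreover have "tilted_var s t = e - a\<^sup>2" by (simp add: var_eq a_def e_def)
  ultimately show ?thesis using K unfolding W_def[symmetric] m_def[symmetric] ep_def[symmetric] by simp
qed

end


lemma tendsto_from_bound:
  fixes f g :: "real \<Rightarrow> real"
  assumes "eventually (\<lambda>x. \<bar>f x - l\<bar> \<le> g x) F" "(g \<longlongrightarrow> 0) F"
  shows "(f \<longlongrightarrow> l) F"
proof -
  have "((\<lambda>x. f x - l) \<longlongrightarrow> 0) F"
    by (rule Lim_null_comparison[OF _ assms(2)]) (use assms(1) in simp)
  then have "((\<lambda>x. (f x - l) + l) \<longlongrightarrow> 0 + l) F" by (intro tendsto_add) auto
  then show ?thesis by simp
qed

theorem corollary2p2: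
  fixes \<sigma> :: real
  assumes "\<sigma> > 0"
  shows "((\<lambda>\<theta>. tilted_mean \<sigma> \<theta> / exp (mu_theta \<sigma> \<theta> + sigma2_theta \<sigma> \<theta> / 2))
            \<longlongrightarrow> 1) at_top \<and>
         ((\<lambda>\<theta>. tilted_var \<sigma> \<theta> /
             (exp (2 * mu_theta \<sigma> \<theta> + sigma2_theta \<sigma> \<theta>) * (exp (sigma2_theta \<sigma> \<theta>) - 1)))
            \<longlongrightarrow> 1) at_top"
proof -
  define S where "S = \<sigma>\<^sup>2"
  have S: "S > 0" using assms by (simp add: S_def)
  define W where "W = (\<lambda>t. lambertW (t * \<sigma>\<^sup>2))"
  define q where "q = (\<lambda>t. tilted_mean \<sigma> t / exp (- W t))"
  define v where "v = (\<lambda>t. W t * tilted_var \<sigma> t / (S * (exp (- W t))\<^sup>2))"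
  have Wlim: "filterlim W at_top at_top" unfolding W_def by (rule lambertW_at_top[OF assms])
  have ev: "eventually (\<lambda>t. t > 0 \<and> W t \<ge> 1) at_top"
    using eventually_gt_at_top[of 0] Wlim[unfolded filterlim_at_top, rule_format, of 1]
    by eventually_elim auto
  have bnd: "eventually (\<lambda>t. \<bar>q t - 1\<bar> \<le> (S + 1) / (2 * W t) \<and>
      \<bar>v t - q t\<bar> \<le> (2 + (S + 1) / 2) * (1 / sqrt (W t))) at_top"
    using ev by eventually_elim (use per_theta[OF assms] in \<open>auto simp: q_def v_def W_def S_def\<close>)
  have l1: "((\<lambda>t. (S + 1) / (2 * W t)) \<longlongrightarrow> 0) at_top"
  proof -
    have "((\<lambda>w. (S + 1) / (2 * w)) \<longlongrightarrow> 0) at_top" by real_asymp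
    then show ?thesis using Wlim by (rule filterlim_compose)
  qed
  have l2: "((\<lambda>t. (2 + (S + 1) / 2) * (1 / sqrt (W t))) \<longlongrightarrow> 0) at_top"
  proof -
    have "((\<lambda>w. (2 + (S + 1) / 2) * (1 / sqrt w)) \<longlongrightarrow> 0) at_top" by real_asymp
    then show ?thesis using Wlim by (rule filterlim_compose)
  qed
  have qlim: "(q \<longlongrightarrow> 1) at_top"
    by (rule tendsto_from_bound[OF _ l1]) (use bnd in \<open>eventually_elim, auto\<close>)
  have vq: "((\<lambda>t. v t - q t) \<longlongrightarrow> 0) at_top"
    by (rule Lim_null_comparison[OF _ l2]) (use bnd in \<open>eventually_elim, auto\<close>)
  have vlim: "(v \<longlongrightarrow> 1) at_top"
  proof -
    have "((\<lambda>t. (v t - q t) + q t) \<longlongrightarrow> 0 + 1) at_top" by (intro tendsto_add vq qlim)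
    then show ?thesis by simp
  qed
  have e1: "((\<lambda>t. exp (S / (1 + W t) / 2)) \<longlongrightarrow> 1) at_top"
  proof -
    have "((\<lambda>w. exp (S / (1 + w) / 2)) \<longlongrightarrow> 1) at_top" by real_asymp
    then show ?thesis using Wlim by (rule filterlim_compose)
  qed
  have e2: "((\<lambda>t. S / (W t * exp (S / (1 + W t)) * (exp (S / (1 + W t)) - 1))) \<longlongrightarrow> 1) at_top"
  proof -
    have "((\<lambda>w. S / (w * exp (S / (1 + w)) * (exp (S / (1 + w)) - 1))) \<longlongrightarrow> 1) at_top"
      using S by real_asymp
    then show ?thesis using Wlim by (rule filterlim_compose)
  qed
  have g1: "((\<lambda>t. q t / exp (S / (1 + W t) / 2)) \<longlongrightarrow> 1 / 1) at_top"
    by (intro tendsto_divide qlim e1) auto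
  have g2: "((\<lambda>t. v t * (S / (W t * exp (S / (1 + W t)) * (exp (S / (1 + W t)) - 1)))) \<longlongrightarrow> 1 * 1) at_top"
    by (intro tendsto_mult vlim e2)
  show ?thesis
  proof
    show "((\<lambda>\<theta>. tilted_mean \<sigma> \<theta> / exp (mu_theta \<sigma> \<theta> + sigma2_theta \<sigma> \<theta> / 2)) \<longlongrightarrow> 1) at_top"
    proof -
      have "tilted_mean \<sigma> t / exp (mu_theta \<sigma> t + sigma2_theta \<sigma> t / 2) = q t / exp (S / (1 + W t) / 2)" for t
      proof -
        have "mu_theta \<sigma> t + sigma2_theta \<sigma> t / 2 = - W t + S / (1 + W t) / 2"
          unfolding mu_theta_def sigma2_theta_def W_def S_def by simp
        then have "exp (mu_theta \<sigma> t + sigma2_theta \<sigma> t / 2) = exp (- W t) * exp (S / (1 + W t) / 2)"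
          by (simp only: exp_add)
        then show ?thesis unfolding q_def by (simp only: divide_divide_eq_left)
      qed
      then show ?thesis using g1 by simp
    qed
    show "((\<lambda>\<theta>. tilted_var \<sigma> \<theta> /
             (exp (2 * mu_theta \<sigma> \<theta> + sigma2_theta \<sigma> \<theta>) * (exp (sigma2_theta \<sigma> \<theta>) - 1))) \<longlongrightarrow> 1) at_top"
    proof -
      have evq: "eventually (\<lambda>t. v t * (S / (W t * exp (S / (1 + W t)) * (exp (S / (1 + W t)) - 1))) =
          tilted_var \<sigma> t / (exp (2 * mu_theta \<sigma> t + sigma2_theta \<sigma> t) * (exp (sigma2_theta \<sigma> t) - 1))) at_top"
        using ev
      proof eventually_elim
        case (elim t)
        have Wp: "W t > 0" using elim by simp
        have s2: "S / (1 + W t) > 0" using S Wp by simp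
        have ex: "exp (S / (1 + W t)) - 1 > 0" using s2 by simp
        have ee: "exp (2 * mu_theta \<sigma> t + sigma2_theta \<sigma> t) = (exp (- W t))\<^sup>2 * exp (S / (1 + W t))"
        proof -
          have "2 * mu_theta \<sigma> t + sigma2_theta \<sigma> t = (- W t + - W t) + S / (1 + W t)"
            unfolding mu_theta_def sigma2_theta_def W_def S_def by simp
          then show ?thesis by (simp only: exp_add power2_eq_square)
        qed
        have s2eq: "sigma2_theta \<sigma> t = S / (1 + W t)"
          unfolding sigma2_theta_def W_def S_def by simp
        show ?case unfolding v_def ee unfolding s2eq using Wp S ex
          by (simp add: field_simps)
      qed
      from Lim_transform_eventually[OF tendsto_mult[OF vlim e2] evq] show ?thesis by simp
    qed
  qed
qed


end
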